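(* In the principal–agent contract design model described in the context, the principal's utility function $u^p:\mathcal{F}\to\mathbb{R}$ can be written as $u^p=g+h$, where $g$ is a concave function on $\mathcal{F}$ and $h$ is a piecewise constant function on $\mathcal{F}$.
   Context: There are $n$ agent actions $a_1,\dots,a_n$ with costs $c(a_i)\in\mathbb{R}$, and $m$ outcomes $o\in\{1,\dots,m\}$ with principal values $v_o\in\mathbb{R}$. Taking action $a_i$ induces a probability distribution $p(\cdot\mid a_i)$ over outcomes. A contract is a vector ${\bm f}\in\mathcal{F}=\mathbb{R}^m_{\ge 0}$, where $f_o$ is the payment to the agent on outcome $o$. Given ${\bm f}$, the agent takes an action $a^*({\bm f})$ maximizing $\mathbb{E}_{o\sim p(\cdot\mid a)}[f_o]-c(a)$ (ties broken in favor of the principal); the agent's utility is $u^a({\bm f})=\max_i\big(\mathbb{E}_{o\sim p(\cdot\mid a_i)}[f_o]-c(a_i)\big)$ and the principal's utility is $u^p({\bm f})=\mathbb{E}_{o\sim p(\cdot\mid a^*({\bm f}))}[v_o-f_o]$. A function is piecewise constant if $\mathcal{F}$ can be partitioned into finitely many pieces on each of which it is constant. *)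

theory Defs
  imports "HOL-Analysis.Analysis"
begin

text \<open>Actions range over a finite type 'a, outcomes over a finite
type 'o. p a k is the probability of outcome o under action a, c a the cost of a,
v k the principal's value for outcome o.\<close>

definition contract_space :: "(real^'o) set" where
  "contract_space = {f. \<forall>k. f $ k \<ge> 0}"

definition agent_util_act :: "('a \<Rightarrow> 'o::finite \<Rightarrow> real) \<Rightarrow> ('a \<Rightarrow> real) \<Rightarrow> real^'o \<Rightarrow> 'a \<Rightarrow> real" where
  "agent_util_act p c f a = (\<Sum>k\<in>UNIV. p a k * f $ k) - c a"

definition princ_util_act :: "('a \<Rightarrow> 'o::finite \<Rightarrow> real) \<Rightarrow> ('o \<Rightarrow> real) \<Rightarrow> real^'o \<Rightarrow> 'a \<Rightarrow> real" where
  "princ_util_act p v f a = (\<Sum>k\<in>UNIV. p a k * (v k - f $ k))"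

definition best_responses :: "('a::finite \<Rightarrow> 'o::finite \<Rightarrow> real) \<Rightarrow> ('a \<Rightarrow> real) \<Rightarrow> real^'o \<Rightarrow> 'a set" where
  "best_responses p c f = {a. \<forall>b. agent_util_act p c f b \<le> agent_util_act p c f a}"

text \<open>Principal's utility: the agent best-responds, ties broken in favour of the principal.\<close>
definition principal_utility :: "('a::finite \<Rightarrow> 'o::finite \<Rightarrow> real) \<Rightarrow> ('a \<Rightarrow> real) \<Rightarrow> ('o \<Rightarrow> real) \<Rightarrow> real^'o \<Rightarrow> real" where
  "principal_utility p c v f = Max (princ_util_act p v f ` best_responses p c f)"

definition piecewise_constant_on :: "'b set \<Rightarrow> ('b \<Rightarrow> real) \<Rightarrow> bool" where
  "piecewise_constant_on S h \<longleftrightarrow>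
     (\<exists>P. finite P \<and> \<Union>P = S \<and> (\<forall>A\<in>P. A \<noteq> {}) \<and> disjoint P \<and>
          (\<forall>A\<in>P. \<forall>x\<in>A. \<forall>y\<in>A. h x = h y))"

end

theory Submission
  imports Defs
begin

theorem lemma4:
  fixes p :: "'a::finite \<Rightarrow> 'o::finite \<Rightarrow> real" and c :: "'a \<Rightarrow> real" and v :: "'o \<Rightarrow> real"
  assumes "\<And>a k. p a k \<ge> 0" and "\<And>a. (\<Sum>k\<in>UNIV. p a k) = 1"
  shows "\<exists>g h. concave_on contract_space g \<and> piecewise_constant_on contract_space h \<and>
           (\<forall>f\<in>contract_space. principal_utility p c v f = g f + h f)"
proof -
  define M where "M f = Max (range (agent_util_act p c f))" for f
  define W where "W a = (\<Sum>k\<in>UNIV. p a k * v k) - c a" for a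
  define h where "h f = Max (W ` best_responses p c f)" for f
  let ?S = "contract_space :: (real^'o) set"
  have cvxS: "convex ?S"
    unfolding convex_def contract_space_def by auto
  have aff: "agent_util_act p c (u *\<^sub>R x + w *\<^sub>R y) a = u * agent_util_act p c x a + w * agent_util_act p c y a"
    if "u + w = 1" for u w x y a
  proof -
    have "agent_util_act p c (u *\<^sub>R x + w *\<^sub>R y) a
       = u * (\<Sum>k\<in>UNIV. p a k * x $ k) + w * (\<Sum>k\<in>UNIV. p a k * y $ k) - (u + w) * c a"
      using that by (simp add: agent_util_act_def sum.distrib sum_distrib_left algebra_simps)
    then show ?thesis by (simp add: agent_util_act_def algebra_simps)
  qed
  have conv: "convex_on ?S M"
    unfolding convex_on_def
  proof (intro conjI cvxS ballI allI impI)
    fix x y :: "real^'o" and u w :: real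
    assume "u \<ge> 0" "w \<ge> 0" "u + w = 1"
    have "agent_util_act p c (u *\<^sub>R x + w *\<^sub>R y) a \<le> u * M x + w * M y" for a
    proof -
      have "agent_util_act p c x a \<le> M x" "agent_util_act p c y a \<le> M y"
        unfolding M_def by auto
      then show ?thesis using aff[OF \<open>u + w = 1\<close>] \<open>u \<ge> 0\<close> \<open>w \<ge> 0\<close>
        by (simp add: add_mono mult_left_mono)
    qed
    then show "M (u *\<^sub>R x + w *\<^sub>R y) \<le> u * M x + w * M y"
      unfolding M_def by (subst Max_le_iff) auto
  qed
  have conc: "concave_on ?S (\<lambda>f. - M f)"
    using conv by (simp add: concave_on_def)
  have BR: "a \<in> best_responses p c f \<longleftrightarrow> agent_util_act p c f a = M f" for f a
  proof
    assume "a \<in> best_responses p c f"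
    then show "agent_util_act p c f a = M f"
      unfolding best_responses_def M_def by (intro Max_eqI[symmetric]) auto
  next
    assume "agent_util_act p c f a = M f"
    then show "a \<in> best_responses p c f"
      unfolding best_responses_def M_def by auto
  qed
  have ne: "best_responses p c f \<noteq> {}" for f
  proof -
    have "M f \<in> range (agent_util_act p c f)" unfolding M_def by (intro Max_in) auto
    then show ?thesis using BR by auto
  qed
  have eq: "principal_utility p c v f = - M f + h f" for f
  proof -
    have pa: "princ_util_act p v f a = W a - agent_util_act p c f a" for a
      by (simp add: princ_util_act_def W_def agent_util_act_def right_diff_distrib sum_subtractf)
    have "princ_util_act p v f ` best_responses p c f = (\<lambda>t. t - M f) ` (W ` best_responses p c f)"
      using BR pa by (auto simp: image_image intro!: image_cong)
    then have "principal_utility p c v f = Max ((\<lambda>t. t - M f) ` (W ` best_responses p c f))"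
      by (simp add: principal_utility_def)
    also have "\<dots> = Max (W ` best_responses p c f) - M f"
      by (rule mono_Max_commute[symmetric]) (auto simp: mono_def ne)
    finally show ?thesis by (simp add: h_def)
  qed
  define P where "P = {A. A \<noteq> {} \<and> (\<exists>B. A = {f\<in>?S. best_responses p c f = B})}"
  have pc: "piecewise_constant_on ?S h"
    unfolding piecewise_constant_on_def
  proof (intro exI[of _ P] conjI)
    have "P \<subseteq> (\<lambda>B. {f\<in>?S. best_responses p c f = B}) ` UNIV" unfolding P_def by auto
    then show "finite P" by (rule finite_subset) simp
    show "\<Union>P = ?S"
    proof
      show "\<Union>P \<subseteq> ?S" unfolding P_def by auto
      show "?S \<subseteq> \<Union>P"
      proof
        fix f assume "f \<in> ?S"
        then have "f \<in> {g\<in>?S. best_responses p c g = best_responses p c f}" by simp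
        moreover have "{g\<in>?S. best_responses p c g = best_responses p c f} \<in> P"
          unfolding P_def using \<open>f \<in> ?S\<close> by blast
        ultimately show "f \<in> \<Union>P" by blast
      qed
    qed
    show "\<forall>A\<in>P. A \<noteq> {}" unfolding P_def by auto
    show "disjoint P" unfolding P_def disjoint_def disjnt_def by auto
    show "\<forall>A\<in>P. \<forall>x\<in>A. \<forall>y\<in>A. h x = h y" unfolding P_def h_def by auto
  qed
  show ?thesis using conc pc eq by blast
qed

end
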